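(* Let $N\ge 1$, let $\beta$ be a non-negative integer, and let $\mathbb{C}[x]=\mathbb{C}[x_1,\dots,x_N]$. For $Q$ in the algebra $\mathcal{H}_0'$ (defined in the context) and every $f\in\mathbb{C}[x]$, $$\sigma^A(Qf)=\rho^A(Q)\,\sigma^A(f).$$
   Context: Operators on $\mathbb{C}[x]$: $s_{ij}$ ($i\neq j$) swaps $x_i$ and $x_j$ in the argument of a function. The Dunkl operators are $D^A_j=\frac{\partial}{\partial x_j}+\beta\sum_{k\neq j}\frac{1-s_{jk}}{x_j-x_k}$, and the Cherednik operators are $\hat D^A_j=x_jD^A_j+\beta\sum_{k<j}s_{jk}$ ($j=1,\dots,N$). $\mathcal{H}_0'$ denotes the algebra of operators on $\mathbb{C}[x]$ generated by the $\hat D^A_j$ and the $s_{ij}$. Define $\tilde a^{\dagger}_j=\frac{1}{\sqrt2}\left(-D^A_j+2x_j\right)$ and $\tilde a_j=\frac{1}{\sqrt2}D^A_j$ (these are the conjugates $e^{\sum_k x_k^2/2}\circ\frac{1}{\sqrt2}(\mp D^A_j+x_j)\circ e^{-\sum_k x_k^2/2}$); the $\tilde a^\dagger_j$ mutually commute. $\rho^A$ denotes the algebra homomorphism from the operator algebra generated by $x_j$, $D^A_j$, $s_{ij}$ into the operators on $\mathbb{C}[x]$ determined by $\rho^A(x_j)=\tilde a^\dagger_j$, $\rho^A(D^A_j)=\tilde a_j$, $\rho^A(s_{ij})=s_{ij}$; in particular $\rho^A(\hat D^A_j)=\tilde a^\dagger_j\tilde a_j+\beta\sum_{k<j}s_{jk}$.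 The linear map $\sigma^A:\mathbb{C}[x]\to\mathbb{C}[x]$ is $\sigma^A(f)=f(\tilde a^\dagger_1,\dots,\tilde a^\dagger_N)\cdot 1$. *)

theory Defs
  imports Complex_Main "HOL-Library.Poly_Mapping"
begin

text \<open>Polynomials in C[x_1,...,x_N]: finitely supported maps from monomials
  (exponent vectors nat =>0 nat, variable x_i has index i, 1 <= i <= N) to complex
  coefficients.\<close>

type_synonym mpoly = "(nat \<Rightarrow>\<^sub>0 nat) \<Rightarrow>\<^sub>0 complex"

definition vars :: "mpoly \<Rightarrow> nat set" where
  "vars f = (\<Union>m\<in>Poly_Mapping.keys f. Poly_Mapping.keys m)"

definition var :: "nat \<Rightarrow> mpoly" where
  "var j = Poly_Mapping.single (Poly_Mapping.single j 1) 1"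

definition smult :: "complex \<Rightarrow> mpoly \<Rightarrow> mpoly" where
  "smult c f = Poly_Mapping.map (\<lambda>a. c * a) f"

definition pderiv :: "nat \<Rightarrow> mpoly \<Rightarrow> mpoly" where
  "pderiv j f = Abs_poly_mapping
     (\<lambda>(m::nat \<Rightarrow>\<^sub>0 nat). of_nat (Poly_Mapping.lookup m j + 1) * Poly_Mapping.lookup f (m + Poly_Mapping.single j 1))"

definition transp :: "nat \<Rightarrow> nat \<Rightarrow> nat \<Rightarrow> nat" where
  "transp j k i = (if i = j then k else if i = k then j else i)"

definition swap_mon :: "nat \<Rightarrow> nat \<Rightarrow> (nat \<Rightarrow>\<^sub>0 nat) \<Rightarrow> (nat \<Rightarrow>\<^sub>0 nat)" where
  "swap_mon j k m = Abs_poly_mapping (\<lambda>(i::nat). Poly_Mapping.lookup m (transp j k i))"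

definition swapP :: "nat \<Rightarrow> nat \<Rightarrow> mpoly \<Rightarrow> mpoly" where
  "swapP j k f = Abs_poly_mapping (\<lambda>(m::nat \<Rightarrow>\<^sub>0 nat). Poly_Mapping.lookup f (swap_mon j k m))"

definition divdiff :: "nat \<Rightarrow> nat \<Rightarrow> mpoly \<Rightarrow> mpoly" where
  "divdiff j k f = (THE g. (var j - var k) * g = f - swapP j k f)"

definition dunkl :: "nat \<Rightarrow> nat \<Rightarrow> nat \<Rightarrow> mpoly \<Rightarrow> mpoly" where
  "dunkl N \<beta> j f = pderiv j f
     + smult (of_nat \<beta>) (\<Sum>k\<in>{1..N} - {j}. divdiff j k f)"

definition cherednik :: "nat \<Rightarrow> nat \<Rightarrow> nat \<Rightarrow> mpoly \<Rightarrow> mpoly" where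
  "cherednik N \<beta> j f = var j * dunkl N \<beta> j f
     + smult (of_nat \<beta>) (\<Sum>k\<in>{1..<j}. swapP j k f)"

definition adag :: "nat \<Rightarrow> nat \<Rightarrow> nat \<Rightarrow> mpoly \<Rightarrow> mpoly" where
  "adag N \<beta> j f = smult (1 / complex_of_real (sqrt 2))
      (- dunkl N \<beta> j f + smult 2 (var j * f))"

definition ann :: "nat \<Rightarrow> nat \<Rightarrow> nat \<Rightarrow> mpoly \<Rightarrow> mpoly" where
  "ann N \<beta> j f = smult (1 / complex_of_real (sqrt 2)) (dunkl N \<beta> j f)"

definition rho_cherednik :: "nat \<Rightarrow> nat \<Rightarrow> nat \<Rightarrow> mpoly \<Rightarrow> mpoly" where
  "rho_cherednik N \<beta> j f = adag N \<beta> j (ann N \<beta> j f)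
     + smult (of_nat \<beta>) (\<Sum>k\<in>{1..<j}. swapP j k f)"

definition adag_mon :: "nat \<Rightarrow> nat \<Rightarrow> (nat \<Rightarrow>\<^sub>0 nat) \<Rightarrow> mpoly \<Rightarrow> mpoly" where
  "adag_mon N \<beta> m = foldr (\<lambda>j acc. (adag N \<beta> j ^^ Poly_Mapping.lookup m j) \<circ> acc) [1..<Suc N] id"

definition sigmaA :: "nat \<Rightarrow> nat \<Rightarrow> mpoly \<Rightarrow> mpoly" where
  "sigmaA N \<beta> f = (\<Sum>m\<in>Poly_Mapping.keys f. smult (Poly_Mapping.lookup f m) (adag_mon N \<beta> m 1))"

text \<open>Elements of the algebra H_0' are represented by expressions in its generators
  (hat D^A_j, s_ij); ev gives the operator, ev_rho its image under rho^A.\<close>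
datatype opexp =
    Cher nat
  | Swp nat nat
  | Ident
  | Comp opexp opexp
  | Add opexp opexp
  | Scal complex opexp

fun wf_op :: "nat \<Rightarrow> opexp \<Rightarrow> bool" where
  "wf_op N (Cher j) = (1 \<le> j \<and> j \<le> N)"
| "wf_op N (Swp i j) = (1 \<le> i \<and> i \<le> N \<and> 1 \<le> j \<and> j \<le> N \<and> i \<noteq> j)"
| "wf_op N Ident = True"
| "wf_op N (Comp a b) = (wf_op N a \<and> wf_op N b)"
| "wf_op N (Add a b) = (wf_op N a \<and> wf_op N b)"
| "wf_op N (Scal c a) = wf_op N a"

fun ev :: "nat \<Rightarrow> nat \<Rightarrow> opexp \<Rightarrow> mpoly \<Rightarrow> mpoly" where
  "ev N \<beta> (Cher j) f = cherednik N \<beta> j f"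
| "ev N \<beta> (Swp i j) f = swapP i j f"
| "ev N \<beta> Ident f = f"
| "ev N \<beta> (Comp a b) f = ev N \<beta> a (ev N \<beta> b f)"
| "ev N \<beta> (Add a b) f = ev N \<beta> a f + ev N \<beta> b f"
| "ev N \<beta> (Scal c a) f = smult c (ev N \<beta> a f)"

fun ev_rho :: "nat \<Rightarrow> nat \<Rightarrow> opexp \<Rightarrow> mpoly \<Rightarrow> mpoly" where
  "ev_rho N \<beta> (Cher j) f = rho_cherednik N \<beta> j f"
| "ev_rho N \<beta> (Swp i j) f = swapP i j f"
| "ev_rho N \<beta> Ident f = f"
| "ev_rho N \<beta> (Comp a b) f = ev_rho N \<beta> a (ev_rho N \<beta> b f)"
| "ev_rho N \<beta> (Add a b) f = ev_rho N \<beta> a f + ev_rho N \<beta> b f"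
| "ev_rho N \<beta> (Scal c a) f = smult c (ev_rho N \<beta> a f)"

end

theory Submission
  imports Defs
begin

abbreviation lk where "lk \<equiv> Poly_Mapping.lookup"
abbreviation cst :: "complex \<Rightarrow> mpoly" where "cst c \<equiv> Poly_Mapping.single 0 c"
abbreviation ee :: "nat \<Rightarrow> (nat \<Rightarrow>\<^sub>0 nat)" where "ee l \<equiv> Poly_Mapping.single l 1"

lemma lookup_single_mult0:
  "lk (Poly_Mapping.single k v * (f::('a::cancel_comm_monoid_add \<Rightarrow>\<^sub>0 'b::comm_semiring_1))) m
    = v * Sum_any (\<lambda>q. lk f q when m = k + q)"
proof -
  have "lk (Poly_Mapping.single k v * f) m = Sum_any (\<lambda>l. (v when k = l) * Sum_any (\<lambda>q. lk f q when m = l + q))"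
    by (simp add: lookup_mult lookup_single)
  also have "\<dots> = v * Sum_any (\<lambda>q. lk f q when m = k + q)"
    by (simp add: when_mult)
  finally show ?thesis .
qed

lemma lookup_single_mult_hit:
  "lk (Poly_Mapping.single k v * (f::('a::cancel_comm_monoid_add \<Rightarrow>\<^sub>0 'b::comm_semiring_1))) (k + q)
    = v * lk f q"
  unfolding lookup_single_mult0 by simp

lemma lookup_single_mult_miss:
  "(\<And>q. m \<noteq> k + q) \<Longrightarrow> lk (Poly_Mapping.single k v * (f::('a::cancel_comm_monoid_add \<Rightarrow>\<^sub>0 'b::comm_semiring_1))) m = 0"
  unfolding lookup_single_mult0 by simp

lemma lookup_cst_mult: "lk (cst c * f) m = c * lk f m"
  using lookup_single_mult_hit[of 0 c f m] by simp

lemma smult_eq: "smult c f = cst c * f"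
  unfolding smult_def by (rule mult_map_scale_conv_mult)

lemma cst_add: "cst (a + b) = cst a + cst b" by (simp add: single_add)
lemma cst_mult: "cst (a * b) = cst a * cst b" by (simp add: mult_single)
lemma cst_zero: "cst 0 = 0" by simp
lemma cst_one: "cst 1 = 1" by simp

lemma ee_split:
  fixes m :: "nat \<Rightarrow>\<^sub>0 nat"
  assumes "0 < lk m l" shows "m = ee l + (m - ee l)"
  by (rule poly_mapping_eqI) (use assms in \<open>auto simp: lookup_add lookup_minus lookup_single when_def\<close>)

lemma ee_nosplit:
  fixes m :: "nat \<Rightarrow>\<^sub>0 nat"
  assumes "lk m l = 0" shows "m \<noteq> ee l + q"
proof
  assume "m = ee l + q"
  then have "lk m l = 1 + lk q l" by (simp add: lookup_add)
  with assms show False by simp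
qed

lemma transp_invol [simp]: "transp j k (transp j k i) = i"
  by (simp add: transp_def)
lemma transp_sym: "transp j k = transp k j"
  by (auto simp: transp_def fun_eq_iff)
lemma inj_transp: "inj (transp j k)"
  by (metis injI transp_invol)
lemma transp_eq_iff [simp]: "transp j k a = transp j k b \<longleftrightarrow> a = b"
  by (metis transp_invol)
lemma transp_left [simp]: "transp j k j = k" and transp_right [simp]: "transp j k k = j"
  by (auto simp: transp_def)
lemma transp_other: "i \<noteq> j \<Longrightarrow> i \<noteq> k \<Longrightarrow> transp j k i = i"
  by (auto simp: transp_def)

lemma lookup_swap_mon: "lk (swap_mon j k m) i = lk m (transp j k i)"
proof -
  have "{i. lk m (transp j k i) \<noteq> 0} = transp j k -` (Poly_Mapping.keys m)"
    by (auto simp: in_keys_iff)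
  then have "finite {i. lk m (transp j k i) \<noteq> 0}"
    using finite_vimageI[OF finite_keys inj_transp] by simp
  then show ?thesis unfolding swap_mon_def by simp
qed

lemma swap_mon_invol [simp]: "swap_mon j k (swap_mon j k m) = m"
  by (rule poly_mapping_eqI) (simp add: lookup_swap_mon)

lemma swap_mon_add: "swap_mon j k (a + b) = swap_mon j k a + swap_mon j k b"
  by (rule poly_mapping_eqI) (simp add: lookup_swap_mon lookup_add)

lemma swap_mon_zero [simp]: "swap_mon j k 0 = 0"
  by (rule poly_mapping_eqI) (simp add: lookup_swap_mon)

lemma swap_mon_ee: "swap_mon j k (ee l) = ee (transp j k l)"
  by (rule poly_mapping_eqI) (auto simp: lookup_swap_mon lookup_single when_def)

lemma inj_swap_mon: "inj (swap_mon j k)"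
  by (metis injI swap_mon_invol)

lemma lookup_swapP: "lk (swapP j k f) m = lk f (swap_mon j k m)"
proof -
  have "{m. lk f (swap_mon j k m) \<noteq> 0} = swap_mon j k -` (Poly_Mapping.keys f)"
    by (auto simp: in_keys_iff)
  then have "finite {m. lk f (swap_mon j k m) \<noteq> 0}"
    using finite_vimageI[OF finite_keys inj_swap_mon] by simp
  then show ?thesis unfolding swapP_def by simp
qed

lemma swapP_add: "swapP j k (f + g) = swapP j k f + swapP j k g"
  by (rule poly_mapping_eqI) (simp add: lookup_swapP lookup_add)

lemma swapP_invol [simp]: "swapP j k (swapP j k f) = f"
  by (rule poly_mapping_eqI) (simp add: lookup_swapP)

lemma swapP_sym: "swapP j k = swapP k j"
proof -
  have "swap_mon j k = swap_mon k j" unfolding swap_mon_def by (simp add: transp_sym)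
  then show ?thesis unfolding swapP_def by simp
qed

lemma swapP_single_mult: "swapP j k (Poly_Mapping.single a v * f) = Poly_Mapping.single (swap_mon j k a) v * swapP j k f"
proof (rule poly_mapping_eqI)
  fix m
  show "lk (swapP j k (Poly_Mapping.single a v * f)) m = lk (Poly_Mapping.single (swap_mon j k a) v * swapP j k f) m"
  proof (cases "\<exists>q. m = swap_mon j k a + q")
    case True
    then obtain q where q: "m = swap_mon j k a + q" by blast
    then have "swap_mon j k m = a + swap_mon j k q" by (simp add: swap_mon_add)
    then show ?thesis using q by (simp add: lookup_swapP lookup_single_mult_hit)
  next
    case False
    have "\<And>q. swap_mon j k m \<noteq> a + q"
    proof
      fix q assume "swap_mon j k m = a + q"
      then have "m = swap_mon j k a + swap_mon j k q"
        by (metis swap_mon_add swap_mon_invol)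
      with False show False by blast
    qed
    then show ?thesis using False by (simp add: lookup_swapP lookup_single_mult_miss)
  qed
qed

lemma swapP_cst_mult: "swapP j k (cst c * f) = cst c * swapP j k f"
  using swapP_single_mult[of j k 0 c f] by simp

lemma swapP_var_mult: "swapP j k (var l * f) = var (transp j k l) * swapP j k f"
  unfolding var_def swapP_single_mult swap_mon_ee ..

lemma swapP_one: "swapP j k 1 = 1"
  apply (rule poly_mapping_eqI)
  apply (simp add: lookup_swapP lookup_one when_def)
  by (metis swap_mon_invol swap_mon_zero)

lemma swapP_cst: "swapP j k (cst c) = cst c"
  using swapP_cst_mult[of j k c 1] by (simp add: swapP_one)

lemma swapP_var: "swapP j k (var l) = var (transp j k l)"
  using swapP_var_mult[of j k l 1] by (simp add: swapP_one)

lemma transp_conj: "transp a b (transp c d (transp a b i)) = transp (transp a b c) (transp a b d) i"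
  by (auto simp: transp_def)

lemma swapP_conj: "swapP a b (swapP c d g) = swapP (transp a b c) (transp a b d) (swapP a b g)"
proof (rule poly_mapping_eqI)
  fix m
  have "swap_mon c d (swap_mon a b m) = swap_mon a b (swap_mon (transp a b c) (transp a b d) m)"
    by (rule poly_mapping_eqI) (simp add: lookup_swap_mon transp_conj[symmetric])
  then show "lk (swapP a b (swapP c d g)) m = lk (swapP (transp a b c) (transp a b d) (swapP a b g)) m"
    by (simp add: lookup_swapP)
qed

definition lin :: "(mpoly \<Rightarrow> mpoly) \<Rightarrow> bool" where
  "lin T \<longleftrightarrow> (\<forall>f g. T (f + g) = T f + T g) \<and> (\<forall>c f. T (cst c * f) = cst c * T f)"

lemma linI: "(\<And>f g. T (f + g) = T f + T g) \<Longrightarrow> (\<And>c f. T (cst c * f) = cst c * T f) \<Longrightarrow> lin T"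
  by (simp add: lin_def)
lemma lin_add: "lin T \<Longrightarrow> T (f + g) = T f + T g" by (simp add: lin_def)
lemma lin_cst: "lin T \<Longrightarrow> T (cst c * f) = cst c * T f" by (simp add: lin_def)
lemma lin_zero: "lin T \<Longrightarrow> T 0 = 0"
  using lin_cst[of T 0 0] by simp
lemma lin_uminus: "lin T \<Longrightarrow> T (- f) = - T f"
  using lin_cst[of T "-1" f] by (simp add: single_uminus)
lemma lin_diff: "lin T \<Longrightarrow> T (f - g) = T f - T g"
  by (metis diff_conv_add_uminus lin_add lin_uminus)
lemma lin_sum: "lin T \<Longrightarrow> T (sum F S) = (\<Sum>x\<in>S. T (F x))"
  by (induction S rule: infinite_finite_induct) (auto simp: lin_zero lin_add)
lemma lin_comp: "lin T \<Longrightarrow> lin U \<Longrightarrow> lin (T \<circ> U)"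
  by (simp add: lin_def)
lemma lin_id: "lin (\<lambda>f. f)" by (simp add: lin_def)
lemma lin_funpow: "lin T \<Longrightarrow> lin (T ^^ n)"
  by (induction n) (auto simp: lin_def)

lemma lin_swapP: "lin (swapP j k)"
  by (rule linI) (simp_all add: swapP_add swapP_cst_mult)

lemma mpoly_decomp: "(f::mpoly) = (\<Sum>m\<in>Poly_Mapping.keys f. Poly_Mapping.single m (lk f m))"
proof (rule poly_mapping_eqI)
  fix m
  have "lk (\<Sum>m\<in>Poly_Mapping.keys f. Poly_Mapping.single m (lk f m)) m
      = (\<Sum>m'\<in>Poly_Mapping.keys f. (lk f m' when m' = m))"
    by (simp add: lookup_sum lookup_single)
  also have "\<dots> = lk f m"
    by (cases "m \<in> Poly_Mapping.keys f") (auto simp: when_def in_keys_iff)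
  finally show "lk f m = lk (\<Sum>m\<in>Poly_Mapping.keys f. Poly_Mapping.single m (lk f m)) m" by simp
qed

lemma var_mult_single: "var l * Poly_Mapping.single m c = Poly_Mapping.single (ee l + m) c"
  unfolding var_def by (simp add: mult_single)

lemma mpoly_induct[case_names cst add var]:
  assumes C: "\<And>c. P (cst c)" and A: "\<And>f g. P f \<Longrightarrow> P g \<Longrightarrow> P (f + g)"
    and V: "\<And>l f. P f \<Longrightarrow> P (var l * f)"
  shows "P f"
proof -
  have mono: "P (Poly_Mapping.single m c)" for m c
  proof (induction m arbitrary: c rule: update_induct)
    case const then show ?case using C by simp
  next
    case (update g a b)
    have upd: "Poly_Mapping.update a b g = g + Poly_Mapping.single a b"
      by (rule poly_mapping_eqI) (use update.hyps(1) in \<open>auto simp: lookup_update lookup_add lookup_single when_def in_keys_iff\<close>)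
    have "P (Poly_Mapping.single (g + Poly_Mapping.single a n) c)" for n c
    proof (induction n arbitrary: c)
      case 0 then show ?case using update.IH by simp
    next
      case (Suc n)
      have "g + Poly_Mapping.single a (Suc n) = ee a + (g + Poly_Mapping.single a n)"
        by (simp add: single_add[symmetric] add_ac)
      then show ?case using V[OF Suc.IH, of a] by (simp add: var_mult_single)
    qed
    then show ?case by (simp add: upd)
  qed
  have "P (\<Sum>m\<in>S. Poly_Mapping.single m (lk f m))" if "finite S" for S
    using that
  proof (induction S rule: finite_induct)
    case empty then show ?case using C[of 0] by simp
  next
    case (insert x F) then show ?case using A mono by simp
  qed
  then show ?thesis by (subst mpoly_decomp) simp
qed

lemma lookup_pderiv: "lk (pderiv j f) m = of_nat (lk m j + 1) * lk f (m + ee j)"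
proof -
  have inj: "inj (\<lambda>m::nat\<Rightarrow>\<^sub>0nat. m + ee j)" by (simp add: inj_def)
  have "{m. of_nat (lk m j + 1) * lk f (m + ee j) \<noteq> (0::complex)} \<subseteq> (\<lambda>m. m + ee j) -` Poly_Mapping.keys f"
    by (auto simp: in_keys_iff)
  then have "finite {m. of_nat (lk m j + 1) * lk f (m + ee j) \<noteq> (0::complex)}"
    using finite_vimageI[OF finite_keys inj] finite_subset by blast
  then show ?thesis unfolding pderiv_def by simp
qed

lemma lin_pderiv: "lin (pderiv j)"
proof (rule linI)
  fix f g show "pderiv j (f + g) = pderiv j f + pderiv j g"
    by (rule poly_mapping_eqI) (simp add: lookup_pderiv lookup_add distrib_left)
next
  fix c f show "pderiv j (cst c * f) = cst c * pderiv j f"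
    by (rule poly_mapping_eqI) (simp only: lookup_pderiv lookup_cst_mult mult.left_commute)
qed

lemma add_ee_nz: "(k::nat\<Rightarrow>\<^sub>0nat) + ee j \<noteq> 0"
proof
  assume "k + ee j = 0"
  then have "lk (k + ee j) j = 0" by simp
  then show False by (simp add: lookup_add)
qed

lemma pderiv_cst: "pderiv j (cst c) = 0"
proof (rule poly_mapping_eqI)
  fix m
  have "lk (cst c) (m + ee j) = 0" using add_ee_nz[of m j] by (simp add: lookup_single when_def)
  then show "lk (pderiv j (cst c)) m = lk 0 m" by (simp only: lookup_pderiv) simp
qed

lemma pderiv_var_mult: "pderiv j (var l * f) = var l * pderiv j f + (if l = j then f else 0)"
proof (rule poly_mapping_eqI)
  fix m
  show "lk (pderiv j (var l * f)) m = lk (var l * pderiv j f + (if l = j then f else 0)) m"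
  proof (cases "0 < lk m l")
    case True
    define q where "q = m - ee l"
    have m: "m = ee l + q" using ee_split[OF True] q_def by simp
    have e1: "m + ee j = ee l + (q + ee j)" by (simp only: m add_ac)
    have L: "lk (pderiv j (var l * f)) m = of_nat (lk m j + 1) * lk f (q + ee j)"
      unfolding lookup_pderiv e1 var_def lookup_single_mult_hit by simp
    have R1: "lk (var l * pderiv j f) m = of_nat (lk q j + 1) * lk f (q + ee j)"
      unfolding m var_def lookup_single_mult_hit lookup_pderiv by simp
    show ?thesis
    proof (cases "l = j")
      case True
      have "lk m j = lk q j + 1" using m True by (simp add: lookup_add)
      moreover have "q + ee j = m" using m True by (simp add: add_ac)
      ultimately show ?thesis using True L R1 by (simp add: lookup_add algebra_simps)
    next
      case False
      have "lk m j = lk q j" using m False by (simp add: lookup_add lookup_single)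
      then show ?thesis using False L R1 by (simp add: lookup_add)
    qed
  next
    case False
    then have z: "lk m l = 0" by simp
    show ?thesis
    proof (cases "l = j")
      case True
      have e1: "m + ee j = ee l + m" using True by (simp only: add_ac)
      have L: "lk (pderiv j (var l * f)) m = lk f m"
        unfolding lookup_pderiv e1 var_def lookup_single_mult_hit using True z by simp
      have R1: "lk (var l * pderiv j f) m = 0"
        unfolding var_def using ee_nosplit[OF z] by (rule lookup_single_mult_miss)
      show ?thesis using L R1 True by (simp add: lookup_add)
    next
      case False
      have z2: "lk (m + ee j) l = 0" using z False by (simp add: lookup_add lookup_single)
      have L: "lk (pderiv j (var l * f)) m = 0"
        unfolding lookup_pderiv var_def lookup_single_mult_miss[OF ee_nosplit[OF z2]] by simp
      have R1: "lk (var l * pderiv j f) m = 0"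
        unfolding var_def using ee_nosplit[OF z] by (rule lookup_single_mult_miss)
      show ?thesis using L R1 False by (simp add: lookup_add)
    qed
  qed
qed

lemma pderiv_swapP: "swapP a b (pderiv j f) = pderiv (transp a b j) (swapP a b f)"
proof (rule poly_mapping_eqI)
  fix m
  have "swap_mon a b (m + ee (transp a b j)) = swap_mon a b m + ee j"
    by (simp only: swap_mon_add swap_mon_ee transp_invol)
  then show "lk (swapP a b (pderiv j f)) m = lk (pderiv (transp a b j) (swapP a b f)) m"
    by (simp add: lookup_swapP lookup_pderiv lookup_swap_mon)
qed

definition cl :: "nat \<Rightarrow> nat \<Rightarrow> nat \<Rightarrow> complex" where
  "cl j k l = (if l = j then 1 else if l = k then -1 else 0)"

lemma var_inj: "var j = var k \<longleftrightarrow> j = k"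
proof
  assume "var j = var k"
  then have "lk (var j) (ee j) = lk (var k) (ee j)" by simp
  then have "ee k = ee j" unfolding var_def by (simp add: lookup_single when_def split: if_splits)
  then have "lk (ee k) j = lk (ee j) j" by simp
  then show "j = k" by (simp add: lookup_single when_def split: if_splits)
qed simp

lemma var_diff_nz: "j \<noteq> k \<Longrightarrow> var j - var k \<noteq> 0"
  using var_inj by simp

lemma var_diff_cl: "j \<noteq> k \<Longrightarrow> var l - var (transp j k l) = (var j - var k) * cst (cl j k l)"
  by (auto simp: cl_def transp_def single_uminus)

lemma divdiff_exists: "j \<noteq> k \<Longrightarrow> \<exists>g. (var j - var k) * g = f - swapP j k f"
proof (induction f rule: mpoly_induct)
  case (cst c) then show ?case by (intro exI[of _ 0]) (simp add: swapP_cst)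
next
  case (add f g)
  then obtain a b where "(var j - var k) * a = f - swapP j k f" "(var j - var k) * b = g - swapP j k g" by blast
  then show ?case by (intro exI[of _ "a + b"]) (simp add: distrib_left swapP_add)
next
  case (var l f)
  then obtain a where a: "(var j - var k) * a = f - swapP j k f" by blast
  have "var l * f - swapP j k (var l * f) = var l * (f - swapP j k f) + (var l - var (transp j k l)) * swapP j k f"
    unfolding swapP_var_mult by (simp add: algebra_simps)
  also have "\<dots> = (var j - var k) * (var l * a + cst (cl j k l) * swapP j k f)"
    using var.prems by (simp add: a[symmetric] var_diff_cl algebra_simps)
  finally show ?case by metis
qed

lemma divdiff_spec: "j \<noteq> k \<Longrightarrow> (var j - var k) * divdiff j k f = f - swapP j k f"
proof -
  assume jk: "j \<noteq> k"
  obtain g where g: "(var j - var k) * g = f - swapP j k f" using divdiff_exists[OF jk] by blast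
  have "divdiff j k f = g" unfolding divdiff_def
    by (rule the_equality) (use g in simp, metis g mult_left_cancel var_diff_nz[OF jk])
  then show ?thesis using g by simp
qed

lemma divdiff_eq: "j \<noteq> k \<Longrightarrow> (var j - var k) * g = f - swapP j k f \<Longrightarrow> divdiff j k f = g"
  using divdiff_spec[of j k f] var_diff_nz[of j k] by (metis mult_left_cancel)

lemma lin_divdiff: "j \<noteq> k \<Longrightarrow> lin (divdiff j k)"
proof (rule linI)
  fix f g assume jk: "j \<noteq> k"
  show "divdiff j k (f + g) = divdiff j k f + divdiff j k g"
    by (rule divdiff_eq[OF jk]) (simp add: distrib_left divdiff_spec[OF jk] swapP_add)
next
  fix c f assume jk: "j \<noteq> k"
  show "divdiff j k (cst c * f) = cst c * divdiff j k f"
    by (rule divdiff_eq[OF jk]) (simp add: mult.left_commute[of _ "cst c"] divdiff_spec[OF jk] swapP_cst_mult right_diff_distrib)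
qed

lemma divdiff_cst: "j \<noteq> k \<Longrightarrow> divdiff j k (cst c) = 0"
  by (rule divdiff_eq) (simp_all add: swapP_cst)

lemma divdiff_var_mult: "j \<noteq> k \<Longrightarrow>
  divdiff j k (var l * f) = var l * divdiff j k f + cst (cl j k l) * swapP j k f"
proof (rule divdiff_eq)
  assume jk: "j \<noteq> k"
  have "var l * f - swapP j k (var l * f) = var l * (f - swapP j k f) + (var l - var (transp j k l)) * swapP j k f"
    unfolding swapP_var_mult by (simp add: algebra_simps)
  also have "\<dots> = (var j - var k) * (var l * divdiff j k f + cst (cl j k l) * swapP j k f)"
    using jk by (simp add: divdiff_spec[OF jk, symmetric] var_diff_cl algebra_simps)
  finally show "(var j - var k) * (var l * divdiff j k f + cst (cl j k l) * swapP j k f) = var l * f - swapP j k (var l * f)"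
    by simp
qed

lemma swapP_var_diff_mult: "swapP a b ((var j - var k) * g) = (var (transp a b j) - var (transp a b k)) * swapP a b g"
  by (simp add: left_diff_distrib lin_diff[OF lin_swapP] swapP_var_mult)

lemma divdiff_swapP: "j \<noteq> k \<Longrightarrow> swapP a b (divdiff j k f) = divdiff (transp a b j) (transp a b k) (swapP a b f)"
proof -
  assume jk: "j \<noteq> k"
  then have jk': "transp a b j \<noteq> transp a b k" by simp
  show ?thesis
  proof (rule sym, rule divdiff_eq[OF jk'])
    have "(var (transp a b j) - var (transp a b k)) * swapP a b (divdiff j k f)
        = swapP a b ((var j - var k) * divdiff j k f)" by (simp add: swapP_var_diff_mult)
    also have "\<dots> = swapP a b f - swapP a b (swapP j k f)"
      by (simp add: divdiff_spec[OF jk] lin_diff[OF lin_swapP])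
    also have "swapP a b (swapP j k f) = swapP (transp a b j) (transp a b k) (swapP a b f)"
      by (rule swapP_conj)
    finally show "(var (transp a b j) - var (transp a b k)) * swapP a b (divdiff j k f) =
      swapP a b f - swapP (transp a b j) (transp a b k) (swapP a b f)" .
  qed
qed

lemma lin_plus: "lin T \<Longrightarrow> lin U \<Longrightarrow> lin (\<lambda>f. T f + U f)"
  by (simp add: lin_def algebra_simps)
lemma lin_cmul: "lin T \<Longrightarrow> lin (\<lambda>f. cst c * T f)"
  by (simp add: lin_def algebra_simps)
lemma lin_sumop: "(\<And>k. k \<in> S \<Longrightarrow> lin (T k)) \<Longrightarrow> lin (\<lambda>f. \<Sum>k\<in>S. T k f)"
  by (simp add: lin_def sum.distrib sum_distrib_left)

lemma transp_range: "a \<in> {1..N} \<Longrightarrow> b \<in> {1..N} \<Longrightarrow> transp a b i \<in> {1..N} \<longleftrightarrow> i \<in> {1..(N::nat)}"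
  unfolding transp_def by (cases "i = a"; cases "i = b") auto

lemma transp_image:
  assumes "a \<in> {1..N}" "b \<in> {1..N}"
  shows "transp a b ` ({1..N} - {j}) = {1..N} - {transp a b j}"
proof
  show "transp a b ` ({1..N} - {j}) \<subseteq> {1..N} - {transp a b j}"
  proof
    fix y assume "y \<in> transp a b ` ({1..N} - {j})"
    then obtain x where x: "x \<in> {1..N}" "x \<noteq> j" "y = transp a b x" by blast
    have "transp a b x \<in> {1..N}" using transp_range[OF assms] x(1) by blast
    moreover have "transp a b x \<noteq> transp a b j" using x(2) by (simp only: transp_eq_iff) simp
    ultimately show "y \<in> {1..N} - {transp a b j}" using x(3) by simp
  qed
  show "{1..N} - {transp a b j} \<subseteq> transp a b ` ({1..N} - {j})"
  proof
    fix i assume i: "i \<in> {1..N} - {transp a b j}"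
    have "transp a b i \<in> {1..N}" using transp_range[OF assms] i by blast
    moreover have "transp a b i \<noteq> j" using i by (metis DiffD2 singletonI transp_invol)
    ultimately have "transp a b i \<in> {1..N} - {j}" by blast
    then show "i \<in> transp a b ` ({1..N} - {j})" by (metis image_eqI transp_invol)
  qed
qed

lemma lin_ofnat: "lin T \<Longrightarrow> T (of_nat n * f) = of_nat n * T f"
  using lin_cst[of T "of_nat n" f] by simp
lemma lin_cmul': "lin T \<Longrightarrow> lin (\<lambda>f. of_nat n * T f)"
  using lin_cmul[of T "of_nat n"] by simp

context fixes N \<beta> :: nat
begin

abbreviation "D \<equiv> dunkl N \<beta>"
abbreviation "B \<equiv> (of_nat \<beta> :: mpoly)"

definition cop :: "nat \<Rightarrow> nat \<Rightarrow> mpoly \<Rightarrow> mpoly" where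
  "cop j l f = (if l = j then f + B * (\<Sum>k\<in>{1..N} - {j}. swapP j k f)
     else if l \<in> {1..N} then - (B * swapP j l f) else 0)"

lemma dunkl_eq: "D j f = pderiv j f + B * (\<Sum>k\<in>{1..N} - {j}. divdiff j k f)"
  unfolding dunkl_def smult_eq by simp

lemma lin_dunkl: "lin (D j)"
proof -
  have "lin (\<lambda>f. pderiv j f + B * (\<Sum>k\<in>{1..N} - {j}. divdiff j k f))"
    by (intro lin_plus lin_pderiv lin_cmul' lin_sumop lin_divdiff) auto
  then show ?thesis unfolding dunkl_eq[abs_def] .
qed

lemma dunkl_cst: "D j (cst c) = 0"
  unfolding dunkl_eq by (simp add: pderiv_cst divdiff_cst)

lemma sum_cl: "(\<Sum>k\<in>{1..N} - {j}. cst (cl j k l) * swapP j k f)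
   = (if l = j then (\<Sum>k\<in>{1..N} - {j}. swapP j k f) else if l \<in> {1..N} then - swapP j l f else 0)"
proof (cases "l = j")
  case True then show ?thesis by (simp add: cl_def)
next
  case False
  have "(\<Sum>k\<in>{1..N} - {j}. cst (cl j k l) * swapP j k f) = (\<Sum>k\<in>{1..N} - {j}. if k = l then - swapP j l f else 0)"
    by (rule sum.cong) (use False in \<open>auto simp: cl_def single_uminus\<close>)
  also have "\<dots> = (if l \<in> {1..N} then - swapP j l f else 0)"
    using False by (simp add: sum.delta')
  finally show ?thesis using False by simp
qed

lemma dunkl_var_mult: "D j (var l * f) = var l * D j f + cop j l f"
proof -
  have "(\<Sum>k\<in>{1..N} - {j}. divdiff j k (var l * f))
      = (\<Sum>k\<in>{1..N} - {j}. var l * divdiff j k f + cst (cl j k l) * swapP j k f)"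
    by (rule sum.cong) (auto simp: divdiff_var_mult)
  also have "\<dots> = var l * (\<Sum>k\<in>{1..N} - {j}. divdiff j k f) + (\<Sum>k\<in>{1..N} - {j}. cst (cl j k l) * swapP j k f)"
    by (simp add: sum.distrib sum_distrib_left)
  finally have S: "(\<Sum>k\<in>{1..N} - {j}. divdiff j k (var l * f)) = \<dots>" .
  show ?thesis
    unfolding dunkl_eq pderiv_var_mult S sum_cl cop_def
    by (simp add: algebra_simps)
qed

lemma dunkl_swapP:
  assumes "a \<in> {1..N}" "b \<in> {1..N}"
  shows "swapP a b (D j f) = D (transp a b j) (swapP a b f)"
proof -
  have "swapP a b (\<Sum>k\<in>{1..N} - {j}. divdiff j k f) = (\<Sum>k\<in>{1..N} - {j}. divdiff (transp a b j) (transp a b k) (swapP a b f))"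
    by (simp add: lin_sum[OF lin_swapP] divdiff_swapP)
  also have "\<dots> = (\<Sum>k\<in>transp a b ` ({1..N} - {j}). divdiff (transp a b j) k (swapP a b f))"
    by (rule sum.reindex[symmetric, unfolded comp_def]) (simp add: inj_on_def)
  also have "\<dots> = (\<Sum>k\<in>{1..N} - {transp a b j}. divdiff (transp a b j) k (swapP a b f))"
    using transp_image[OF assms] by simp
  finally show ?thesis
    unfolding dunkl_eq by (simp add: lin_add[OF lin_swapP] lin_ofnat[OF lin_swapP] pderiv_swapP)
qed

lemma dunkl_swapP':
  assumes "a \<in> {1..N}" "b \<in> {1..N}"
  shows "D i (swapP a b g) = swapP a b (D (transp a b i) g)"
  using dunkl_swapP[OF assms, of "transp a b i" g] by simp

end

context fixes N \<beta> :: nat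
begin

lemma cop_zero: "l \<notin> {1..N} \<Longrightarrow> j \<in> {1..N} \<Longrightarrow> cop N \<beta> j l f = 0"
  unfolding cop_def by auto
lemma cop_other: "l \<in> {1..N} \<Longrightarrow> l \<noteq> j \<Longrightarrow> cop N \<beta> j l f = - (B \<beta> * swapP j l f)"
  unfolding cop_def by auto
lemma cop_same: "cop N \<beta> j j f = f + B \<beta> * (\<Sum>k\<in>{1..N} - {j}. swapP j k f)"
  unfolding cop_def by auto

lemma D_swap_fix:
  assumes "j \<in> {1..N}" "k \<in> {1..N}" "l \<in> {1..N}" "j \<noteq> k" "j \<noteq> l"
  shows "D N \<beta> j (swapP k l f) = swapP k l (D N \<beta> j f)"
  using dunkl_swapP'[OF assms(2,3), where i=j and g=f and \<beta>=\<beta>] assms by (simp add: transp_other)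

lemma key_other:
  assumes "j \<in> {1..N}" "k \<in> {1..N}" "l \<in> {1..N}" "l \<noteq> j" "l \<noteq> k"
  shows "cop N \<beta> j l (D N \<beta> k f) + D N \<beta> j (cop N \<beta> k l f) = cop N \<beta> k l (D N \<beta> j f) + D N \<beta> k (cop N \<beta> j l f)"
proof (cases "j = k")
  case True then show ?thesis by simp
next
  case False
  have a: "D N \<beta> j (cop N \<beta> k l f) = - (B \<beta> * swapP k l (D N \<beta> j f))"
    using assms False by (simp add: cop_other lin_uminus[OF lin_dunkl] lin_ofnat[OF lin_dunkl] D_swap_fix)
  have b: "D N \<beta> k (cop N \<beta> j l f) = - (B \<beta> * swapP j l (D N \<beta> k f))"
    using assms False by (simp add: cop_other lin_uminus[OF lin_dunkl] lin_ofnat[OF lin_dunkl] D_swap_fix)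
  show ?thesis unfolding a b using assms by (simp add: cop_other)
qed

lemma key_same:
  assumes "j \<in> {1..N}" "k \<in> {1..N}" "j \<noteq> k"
  shows "cop N \<beta> j j (D N \<beta> k f) + D N \<beta> j (cop N \<beta> k j f) = cop N \<beta> k j (D N \<beta> j f) + D N \<beta> k (cop N \<beta> j j f)"
proof -
  let ?S = "{1..N} - {j}"
  have kS: "k \<in> ?S" using assms by auto
  have Sd: "?S = insert k (?S - {k})" using kS by auto
  have e1: "D N \<beta> j (cop N \<beta> k j f) = - (B \<beta> * swapP j k (D N \<beta> k f))"
  proof -
    have "D N \<beta> j (cop N \<beta> k j f) = - (B \<beta> * D N \<beta> j (swapP k j f))"
      using assms by (simp add: cop_other lin_uminus[OF lin_dunkl] lin_ofnat[OF lin_dunkl])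
    also have "D N \<beta> j (swapP k j f) = swapP k j (D N \<beta> k f)"
      using dunkl_swapP'[OF assms(2,1), where i=j and g=f and \<beta>=\<beta>] by simp
    finally show ?thesis by (simp add: swapP_sym)
  qed
  have e2: "cop N \<beta> k j (D N \<beta> j f) = - (B \<beta> * swapP j k (D N \<beta> j f))"
    using assms by (simp add: cop_other swapP_sym)
  have e3: "D N \<beta> k (\<Sum>m\<in>?S. swapP j m f) = swapP j k (D N \<beta> j f) + (\<Sum>m\<in>?S - {k}. swapP j m (D N \<beta> k f))"
  proof -
    have "D N \<beta> k (\<Sum>m\<in>?S. swapP j m f) = (\<Sum>m\<in>?S. swapP j m (D N \<beta> (transp j m k) f))"
      by (rule trans[OF lin_sum[OF lin_dunkl]], rule sum.cong) (use assms in \<open>auto intro!: dunkl_swapP'\<close>)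
    also have "\<dots> = swapP j k (D N \<beta> (transp j k k) f) + (\<Sum>m\<in>?S - {k}. swapP j m (D N \<beta> (transp j m k) f))"
      by (rule sum.remove) (use kS in auto)
    also have "(\<Sum>m\<in>?S - {k}. swapP j m (D N \<beta> (transp j m k) f)) = (\<Sum>m\<in>?S - {k}. swapP j m (D N \<beta> k f))"
      by (rule sum.cong) (use assms in \<open>auto simp: transp_other\<close>)
    finally show ?thesis by (simp only: transp_right)
  qed
  have e4: "(\<Sum>m\<in>?S. swapP j m (D N \<beta> k f)) = swapP j k (D N \<beta> k f) + (\<Sum>m\<in>?S - {k}. swapP j m (D N \<beta> k f))"
    by (rule sum.remove) (use kS in auto)
  show ?thesis
    unfolding e1 e2 cop_same lin_add[OF lin_dunkl] lin_ofnat[OF lin_dunkl] e3 e4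
    by (simp add: algebra_simps)
qed

lemma dunkl_comm:
  assumes "j \<in> {1..N}" "k \<in> {1..N}"
  shows "D N \<beta> j (D N \<beta> k f) = D N \<beta> k (D N \<beta> j f)"
proof (cases "j = k")
  case True then show ?thesis by simp
next
  case False
  show ?thesis
  proof (induction f rule: mpoly_induct)
    case (cst c) then show ?case by (simp add: dunkl_cst lin_zero[OF lin_dunkl])
  next
    case (add f g) then show ?case by (simp add: lin_add[OF lin_dunkl])
  next
    case (var l f)
    have X: "D N \<beta> j (D N \<beta> k (var l * f)) = var l * D N \<beta> j (D N \<beta> k f) + (cop N \<beta> j l (D N \<beta> k f) + D N \<beta> j (cop N \<beta> k l f))"
      by (simp add: dunkl_var_mult lin_add[OF lin_dunkl] add_ac)
    have Y: "D N \<beta> k (D N \<beta> j (var l * f)) = var l * D N \<beta> k (D N \<beta> j f) + (cop N \<beta> k l (D N \<beta> j f) + D N \<beta> k (cop N \<beta> j l f))"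
      by (simp add: dunkl_var_mult lin_add[OF lin_dunkl] add_ac)
    have K: "cop N \<beta> j l (D N \<beta> k f) + D N \<beta> j (cop N \<beta> k l f) = cop N \<beta> k l (D N \<beta> j f) + D N \<beta> k (cop N \<beta> j l f)"
    proof (cases "l \<in> {1..N}")
      case False
      then show ?thesis using assms by (simp add: cop_zero lin_zero[OF lin_dunkl])
    next
      case True
      consider "l = j" | "l = k" | "l \<noteq> j" "l \<noteq> k" by blast
      then show ?thesis
      proof cases
        case 1 then show ?thesis using key_same[OF assms False] by simp
      next
        case 2 then show ?thesis using key_same[OF assms(2,1)] False by simp
      next
        case 3 then show ?thesis using key_other[OF assms True] by simp
      qed
    qed
    show ?case unfolding X Y K var.IH ..
  qed
qed

end

abbreviation R :: mpoly where "R \<equiv> cst (1 / complex_of_real (sqrt 2))"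

lemma RR2: "R * R * 2 = 1"
proof -
  have s: "complex_of_real (sqrt 2) * complex_of_real (sqrt 2) = 2"
  proof -
    have "complex_of_real (sqrt 2) * complex_of_real (sqrt 2) = complex_of_real (sqrt 2 * sqrt 2)"
      by (simp only: of_real_mult)
    also have "sqrt 2 * sqrt 2 = (2::real)" by simp
    finally show ?thesis by simp
  qed
  have "(1 / complex_of_real (sqrt 2)) * (1 / complex_of_real (sqrt 2)) * 2 = 2 / (complex_of_real (sqrt 2) * complex_of_real (sqrt 2))"
    by simp
  also have "\<dots> = 1" unfolding s by simp
  finally have "cst ((1 / complex_of_real (sqrt 2)) * (1 / complex_of_real (sqrt 2)) * 2) = 1" by simp
  then show ?thesis by (simp only: cst_mult single_numeral)
qed
lemma lin_numeral: "lin T \<Longrightarrow> T (numeral n * f) = numeral n * T f"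
  using lin_cst[of T "numeral n" f] by simp

context fixes N \<beta> :: nat
begin

lemma adag_eq: "adag N \<beta> j f = R * (2 * (var j * f) - D N \<beta> j f)"
  unfolding adag_def smult_eq by (simp add: algebra_simps)

lemma ann_eq: "ann N \<beta> j f = R * D N \<beta> j f"
  unfolding ann_def smult_eq ..

lemma lin_adag: "lin (adag N \<beta> j)"
proof (rule linI)
  fix f g show "adag N \<beta> j (f + g) = adag N \<beta> j f + adag N \<beta> j g"
    unfolding adag_eq lin_add[OF lin_dunkl] by (simp add: algebra_simps)
next
  fix c f show "adag N \<beta> j (cst c * f) = cst c * adag N \<beta> j f"
    unfolding adag_eq lin_cst[OF lin_dunkl] by (simp add: algebra_simps)
qed

lemma lin_ann: "lin (ann N \<beta> j)"
proof (rule linI)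
  fix f g show "ann N \<beta> j (f + g) = ann N \<beta> j f + ann N \<beta> j g"
    unfolding ann_eq lin_add[OF lin_dunkl] by (simp add: algebra_simps)
next
  fix c f show "ann N \<beta> j (cst c * f) = cst c * ann N \<beta> j f"
    unfolding ann_eq lin_cst[OF lin_dunkl] by (simp add: algebra_simps)
qed

lemma ann_cst: "ann N \<beta> j (cst c) = 0"
  by (simp add: ann_eq dunkl_cst)

lemma adag_swapP:
  assumes "a \<in> {1..N}" "b \<in> {1..N}"
  shows "swapP a b (adag N \<beta> j f) = adag N \<beta> (transp a b j) (swapP a b f)"
  unfolding adag_eq
  by (simp only: lin_cst[OF lin_swapP] lin_diff[OF lin_swapP] lin_numeral[OF lin_swapP] swapP_var_mult dunkl_swapP[OF assms])

lemma ann_swapP: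
  assumes "a \<in> {1..N}" "b \<in> {1..N}"
  shows "swapP a b (ann N \<beta> j f) = ann N \<beta> (transp a b j) (swapP a b f)"
  unfolding ann_eq
  by (simp only: lin_cst[OF lin_swapP] dunkl_swapP[OF assms])

lemma adag_adag_expand:
  "adag N \<beta> j (adag N \<beta> k f) = R * R * (4 * (var j * (var k * f)) - 2 * (var j * D N \<beta> k f)
     - 2 * (var k * D N \<beta> j f) - 2 * cop N \<beta> j k f + D N \<beta> j (D N \<beta> k f))"
  unfolding adag_eq
  by (simp only: lin_cst[OF lin_dunkl] lin_diff[OF lin_dunkl] lin_numeral[OF lin_dunkl] lin_add[OF lin_dunkl] dunkl_var_mult) (simp add: algebra_simps)

lemma cop_sym: "j \<in> {1..N} \<Longrightarrow> k \<in> {1..N} \<Longrightarrow> cop N \<beta> j k f = cop N \<beta> k j f"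
  by (cases "j = k") (simp_all add: cop_other swapP_sym)

lemma adag_comm:
  assumes "j \<in> {1..N}" "k \<in> {1..N}"
  shows "adag N \<beta> j (adag N \<beta> k f) = adag N \<beta> k (adag N \<beta> j f)"
  unfolding adag_adag_expand cop_sym[OF assms] dunkl_comm[OF assms]
  by (simp add: algebra_simps)

lemma ann_adag:
  assumes "j \<in> {1..N}" "l \<in> {1..N}"
  shows "ann N \<beta> j (adag N \<beta> l f) = adag N \<beta> l (ann N \<beta> j f) + cop N \<beta> j l f"
proof -
  have L: "ann N \<beta> j (adag N \<beta> l f) = R * R * (2 * (var l * D N \<beta> j f) + 2 * cop N \<beta> j l f - D N \<beta> j (D N \<beta> l f))"
    unfolding adag_eq ann_eq
    by (simp only: lin_cst[OF lin_dunkl] lin_diff[OF lin_dunkl] lin_numeral[OF lin_dunkl] lin_add[OF lin_dunkl] dunkl_var_mult) (simp add: algebra_simps)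
  have Rt: "adag N \<beta> l (ann N \<beta> j f) = R * R * (2 * (var l * D N \<beta> j f) - D N \<beta> l (D N \<beta> j f))"
    unfolding adag_eq ann_eq
    by (simp only: lin_cst[OF lin_dunkl] lin_diff[OF lin_dunkl] lin_numeral[OF lin_dunkl] lin_add[OF lin_dunkl] dunkl_var_mult) (simp add: algebra_simps)
  have "R * R * (2 * cop N \<beta> j l f) = (R * R * 2) * cop N \<beta> j l f" by (simp add: algebra_simps)
  then have c: "R * R * (2 * cop N \<beta> j l f) = cop N \<beta> j l f" by (simp only: RR2 mult_1)
  show ?thesis unfolding L Rt dunkl_comm[OF assms(1,2)]
    using c by (simp add: algebra_simps)
qed

end

lemma foldr_zero:
  "(\<And>j. j \<in> set xs \<Longrightarrow> n j = 0) \<Longrightarrow> foldr (\<lambda>j acc. (T j ^^ n j) \<circ> acc) xs id = id"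
  by (induction xs) auto

lemma funpow_comm:
  assumes "\<And>x. S (T x) = T (S x)"
  shows "S ((T ^^ k) x) = (T ^^ k) (S x)"
  by (induction k) (simp_all add: assms)

lemma foldr_step:
  assumes "distinct xs" "l \<in> set xs" "\<And>j x. j \<in> set xs \<Longrightarrow> T l (T j x) = T j (T l x)"
  shows "foldr (\<lambda>j acc. (T j ^^ (n(l := Suc (n l))) j) \<circ> acc) xs id = T l \<circ> foldr (\<lambda>j acc. (T j ^^ n j) \<circ> acc) xs id"
  using assms
proof (induction xs)
  case Nil then show ?case by simp
next
  case (Cons a xs)
  show ?case
  proof (cases "a = l")
    case True
    then have "l \<notin> set xs" using Cons.prems(1) by simp
    then have eq: "foldr (\<lambda>j acc. (T j ^^ (n(l := Suc (n l))) j) \<circ> acc) xs id = foldr (\<lambda>j acc. (T j ^^ n j) \<circ> acc) xs id"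
      by (intro foldr_cong) auto
    have "foldr (\<lambda>j acc. (T j ^^ (n(l := Suc (n l))) j) \<circ> acc) (a # xs) id
        = (T a ^^ (n(l := Suc (n l))) a) \<circ> foldr (\<lambda>j acc. (T j ^^ (n(l := Suc (n l))) j) \<circ> acc) xs id"
      by (simp only: foldr.simps comp_apply)
    also have "\<dots> = (T l ^^ Suc (n l)) \<circ> foldr (\<lambda>j acc. (T j ^^ n j) \<circ> acc) xs id"
      unfolding eq using True by simp
    also have "\<dots> = T l \<circ> ((T l ^^ n l) \<circ> foldr (\<lambda>j acc. (T j ^^ n j) \<circ> acc) xs id)"
      by (simp only: funpow.simps comp_assoc)
    also have "\<dots> = T l \<circ> foldr (\<lambda>j acc. (T j ^^ n j) \<circ> acc) (a # xs) id"
      using True by (simp only: foldr.simps comp_apply)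
    finally show ?thesis .
  next
    case False
    have IH: "foldr (\<lambda>j acc. (T j ^^ (n(l := Suc (n l))) j) \<circ> acc) xs id = T l \<circ> foldr (\<lambda>j acc. (T j ^^ n j) \<circ> acc) xs id"
      by (rule Cons.IH) (use Cons.prems False in auto)
    have c: "T l ((T a ^^ n a) x) = (T a ^^ n a) (T l x)" for x
      by (rule funpow_comm) (use Cons.prems(3) in auto)
    have "foldr (\<lambda>j acc. (T j ^^ (n(l := Suc (n l))) j) \<circ> acc) (a # xs) id
        = (T a ^^ (n(l := Suc (n l))) a) \<circ> foldr (\<lambda>j acc. (T j ^^ (n(l := Suc (n l))) j) \<circ> acc) xs id"
      by (simp only: foldr.simps comp_apply)
    also have "\<dots> = (T a ^^ n a) \<circ> (T l \<circ> foldr (\<lambda>j acc. (T j ^^ n j) \<circ> acc) xs id)"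
      unfolding IH using False by simp
    also have "\<dots> = T l \<circ> ((T a ^^ n a) \<circ> foldr (\<lambda>j acc. (T j ^^ n j) \<circ> acc) xs id)"
      by (simp add: fun_eq_iff c)
    also have "\<dots> = T l \<circ> foldr (\<lambda>j acc. (T j ^^ n j) \<circ> acc) (a # xs) id"
      by (simp only: foldr.simps comp_apply)
    finally show ?thesis .
  qed
qed

lemma foldr_skip:
  assumes "l \<notin> set xs"
  shows "foldr (\<lambda>j acc. (T j ^^ (n(l := k)) j) \<circ> acc) xs id = foldr (\<lambda>j acc. (T j ^^ n j) \<circ> acc) xs id"
  using assms by (intro foldr_cong) auto

lemma lookup_ee_add: "lk (ee l + m) = (lk m)(l := Suc (lk m l))"
  by (auto simp: fun_eq_iff lookup_add lookup_single)

context fixes N \<beta> :: nat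
begin

abbreviation "A \<equiv> adag_mon N \<beta>"
abbreviation "sig \<equiv> sigmaA N \<beta>"

lemma adag_mon_zero: "A 0 = id"
  unfolding adag_mon_def by (rule foldr_zero) simp

lemma adag_mon_step_in: "l \<in> {1..N} \<Longrightarrow> A (ee l + m) = adag N \<beta> l \<circ> A m"
  unfolding adag_mon_def lookup_ee_add
  by (rule foldr_step) (auto intro: adag_comm)

lemma adag_mon_step_out: "l \<notin> {1..N} \<Longrightarrow> A (ee l + m) = A m"
  unfolding adag_mon_def lookup_ee_add
  by (rule foldr_skip) auto

lemma sig_sup: "finite S \<Longrightarrow> Poly_Mapping.keys f \<subseteq> S \<Longrightarrow> sig f = (\<Sum>m\<in>S. cst (lk f m) * A m 1)"
  unfolding sigmaA_def smult_eq
  by (rule sum.mono_neutral_left) (auto simp: in_keys_iff)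

lemma sig_decomp: "sig f = (\<Sum>m\<in>Poly_Mapping.keys f. cst (lk f m) * A m 1)"
  by (rule sig_sup) auto

lemma lin_sig: "lin sig"
proof (rule linI)
  fix f g :: mpoly
  let ?S = "Poly_Mapping.keys f \<union> Poly_Mapping.keys g"
  have "sig (f + g) = (\<Sum>m\<in>?S. cst (lk (f + g) m) * A m 1)"
    by (rule sig_sup) (auto simp: keys_add)
  also have "\<dots> = (\<Sum>m\<in>?S. cst (lk f m) * A m 1) + (\<Sum>m\<in>?S. cst (lk g m) * A m 1)"
    by (simp add: lookup_add cst_add distrib_right sum.distrib)
  also have "\<dots> = sig f + sig g"
    by (simp add: sig_sup[symmetric])
  finally show "sig (f + g) = sig f + sig g" .
next
  fix c and f :: mpoly
  have k: "Poly_Mapping.keys (cst c * f) \<subseteq> Poly_Mapping.keys f"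
    by (auto simp: in_keys_iff lookup_cst_mult)
  have "sig (cst c * f) = (\<Sum>m\<in>Poly_Mapping.keys f. cst (lk (cst c * f) m) * A m 1)"
    by (rule sig_sup[OF finite_keys k])
  also have "\<dots> = cst c * (\<Sum>m\<in>Poly_Mapping.keys f. cst (lk f m) * A m 1)"
    by (simp add: lookup_cst_mult cst_mult sum_distrib_left mult.assoc)
  also have "\<dots> = cst c * sig f" by (simp only: sig_decomp)
  finally show "sig (cst c * f) = cst c * sig f" .
qed

lemma sig_single: "sig (Poly_Mapping.single m c) = cst c * A m 1"
proof -
  have "sig (Poly_Mapping.single m c) = (\<Sum>m'\<in>{m}. cst (lk (Poly_Mapping.single m c) m') * A m' 1)"
    by (rule sig_sup) auto
  then show ?thesis by simp
qed

lemma sig_cst: "sig (cst c) = cst c"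
  using sig_single[of 0 c] by (simp add: adag_mon_zero)

lemma sig_var_in:
  assumes "l \<in> {1..N}"
  shows "sig (var l * f) = adag N \<beta> l (sig f)"
proof -
  have "var l * f = (\<Sum>m\<in>Poly_Mapping.keys f. Poly_Mapping.single (ee l + m) (lk f m))"
    by (subst mpoly_decomp) (simp add: sum_distrib_left var_mult_single)
  then have "sig (var l * f) = (\<Sum>m\<in>Poly_Mapping.keys f. cst (lk f m) * A (ee l + m) 1)"
    by (simp add: lin_sum[OF lin_sig] sig_single)
  also have "\<dots> = (\<Sum>m\<in>Poly_Mapping.keys f. cst (lk f m) * adag N \<beta> l (A m 1))"
    by (rule sum.cong) (simp_all only: adag_mon_step_in[OF assms] comp_apply)
  also have "\<dots> = adag N \<beta> l (sig f)"
    by (simp add: sig_decomp lin_sum[OF lin_adag] lin_cst[OF lin_adag])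
  finally show ?thesis .
qed

lemma sig_var_out:
  assumes "l \<notin> {1..N}"
  shows "sig (var l * f) = sig f"
proof -
  have "var l * f = (\<Sum>m\<in>Poly_Mapping.keys f. Poly_Mapping.single (ee l + m) (lk f m))"
    by (subst mpoly_decomp) (simp add: sum_distrib_left var_mult_single)
  then have "sig (var l * f) = (\<Sum>m\<in>Poly_Mapping.keys f. cst (lk f m) * A (ee l + m) 1)"
    by (simp add: lin_sum[OF lin_sig] sig_single)
  also have "\<dots> = sig f"
    unfolding adag_mon_step_out[OF assms] sig_decomp ..
  finally show ?thesis .
qed

lemma sig_swapP:
  assumes "a \<in> {1..N}" "b \<in> {1..N}"
  shows "sig (swapP a b f) = swapP a b (sig f)"
proof (induction f rule: mpoly_induct)
  case (cst c) then show ?case by (simp add: swapP_cst sig_cst)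
next
  case (add f g) then show ?case by (simp add: lin_add[OF lin_sig] lin_add[OF lin_swapP])
next
  case (var l f)
  show ?case
  proof (cases "l \<in> {1..N}")
    case True
    then have t: "transp a b l \<in> {1..N}" using transp_range[OF assms] by blast
    show ?thesis
      unfolding swapP_var_mult sig_var_in[OF t] sig_var_in[OF True] var.IH
      by (simp add: adag_swapP[OF assms])
  next
    case False
    then have t: "transp a b l = l" using assms by (auto intro: transp_other)
    show ?thesis
      unfolding swapP_var_mult t sig_var_out[OF False] var.IH ..
  qed
qed

lemma sig_cop:
  assumes "j \<in> {1..N}"
  shows "sig (cop N \<beta> j l f) = cop N \<beta> j l (sig f)"
proof -
  have s: "sig (\<Sum>k\<in>{1..N} - {j}. swapP j k f) = (\<Sum>k\<in>{1..N} - {j}. swapP j k (sig f))"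
    unfolding lin_sum[OF lin_sig]
    by (rule sum.cong) (use assms in \<open>auto intro: sig_swapP\<close>)
  show ?thesis
  proof (cases "l = j")
    case True
    show ?thesis unfolding True cop_same lin_add[OF lin_sig] lin_ofnat[OF lin_sig] s ..
  next
    case False
    show ?thesis
    proof (cases "l \<in> {1..N}")
      case True
      show ?thesis unfolding cop_other[OF True False] lin_uminus[OF lin_sig] lin_ofnat[OF lin_sig] sig_swapP[OF assms True] ..
    next
      case nin: False
      show ?thesis unfolding cop_zero[OF nin assms] lin_zero[OF lin_sig] ..
    qed
  qed
qed

lemma sig_dunkl:
  assumes "j \<in> {1..N}"
  shows "sig (D N \<beta> j f) = ann N \<beta> j (sig f)"
proof (induction f rule: mpoly_induct)
  case (cst c) then show ?case by (simp add: dunkl_cst sig_cst ann_cst lin_zero[OF lin_sig])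
next
  case (add f g) then show ?case by (simp add: lin_add[OF lin_sig] lin_add[OF lin_ann] lin_add[OF lin_dunkl])
next
  case (var l f)
  show ?case
  proof (cases "l \<in> {1..N}")
    case True
    show ?thesis
      unfolding dunkl_var_mult lin_add[OF lin_sig] sig_var_in[OF True] var.IH sig_cop[OF assms]
        ann_adag[OF assms True] ..
  next
    case False
    show ?thesis
      unfolding dunkl_var_mult cop_zero[OF False assms] by (simp add: sig_var_out[OF False] var.IH)
  qed
qed

end

theorem theorem2p4:
  fixes N \<beta> :: nat and Q :: opexp and f :: mpoly
  assumes "N \<ge> 1"
    and "wf_op N Q"
    and "vars f \<subseteq> {1..N}"
  shows "sigmaA N \<beta> (ev N \<beta> Q f) = ev_rho N \<beta> Q (sigmaA N \<beta> f)"
  using assms(2)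
proof (induction Q arbitrary: f)
  case (Cher j)
  then have j: "j \<in> {1..N}" by simp
  have s: "sigmaA N \<beta> (\<Sum>k\<in>{1..<j}. swapP j k f) = (\<Sum>k\<in>{1..<j}. swapP j k (sigmaA N \<beta> f))"
    using j by (simp add: lin_sum[OF lin_sig] sig_swapP)
  show ?case
    unfolding ev.simps ev_rho.simps cherednik_def rho_cherednik_def smult_eq single_of_nat
      lin_add[OF lin_sig] lin_ofnat[OF lin_sig] s sig_var_in[OF j] sig_dunkl[OF j] ..
next
  case (Swp i j) then show ?case by (simp add: sig_swapP)
next
  case Ident then show ?case by simp
next
  case (Comp a b) then show ?case by simp
next
  case (Add a b) then show ?case by (simp add: lin_add[OF lin_sig])
next
  case (Scal c a) then show ?case by (simp add: smult_eq lin_cst[OF lin_sig])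
qed

end
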